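(* Let $(b,c)$ be a connected canonically compactifiable weighted graph over $X$, and let $K$ and $j:X\to K$ be as in the context. Then $j(X)$ is a dense open subset of $K$; in fact, for every $x\in X$ the singleton $\{j(x)\}$ is open in $K$.
   Context: Let $X$ be a countably infinite set. A weighted graph $(b,c)$ over $X$ consists of a symmetric $b:X\times X\to[0,\infty)$ with $b(x,x)=0$ and $\sum_{y}b(x,y)<\infty$ for all $x$, and $c:X\to[0,\infty)$; it is connected if any two distinct vertices are joined by a finite sequence of pairwise distinct vertices with consecutive ones satisfying $b>0$. Let $\widetilde Q(f)=\frac12\sum_{x,y}b(x,y)|f(x)-f(y)|^2+\sum_x c(x)|f(x)|^2$ and $\widetilde D=\{f:X\to\mathbb C:\widetilde Q(f)<\infty\}$. The graph is canonically compactifiable if $\widetilde D\subseteq\ell^\infty(X)$; then $\widetilde D$ is an algebra. Let $\mathcal A$ be the sup-norm closure of $\widetilde D$ in $\ell^\infty(X)$ and $\mathcal A^+$ the smallest $C^*$-subalgebra of $\ell^\infty(X)$ containing $\mathcal A$ and the constant function $1$. Let $K$ be the set of characters (nonzero multiplicative linear functionals $\mathcal A^+\to\mathbb C$) with the weak-$*$ topology, a compact Hausdorff space. Define $j:X\to K$ by $j(x)=\delta_x$, $\delta_x(f)=f(x)$. *)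

theory Defs
  imports "HOL-Analysis.Analysis"
begin

text \<open>The countably infinite vertex set X is modelled as a type 'a of class countable
  with infinite UNIV. Complex functions on X are of type 'a \<Rightarrow> complex.\<close>

definition weighted_graph :: "('a \<Rightarrow> 'a \<Rightarrow> real) \<Rightarrow> ('a \<Rightarrow> real) \<Rightarrow> bool" where
  "weighted_graph b c \<longleftrightarrow>
     (\<forall>x y. b x y \<ge> 0) \<and> (\<forall>x y. b x y = b y x) \<and> (\<forall>x. b x x = 0) \<and>
     (\<forall>x. (b x) summable_on UNIV) \<and> (\<forall>x. c x \<ge> 0)"

definition graph_connected :: "('a \<Rightarrow> 'a \<Rightarrow> real) \<Rightarrow> bool" where
  "graph_connected b \<longleftrightarrow>
     (\<forall>x y. x \<noteq> y \<longrightarrow> (\<exists>ps. ps \<noteq> [] \<and> distinct ps \<and> hd ps = x \<and> last ps = y \<and>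
        (\<forall>i. Suc i < length ps \<longrightarrow> b (ps ! i) (ps ! Suc i) > 0)))"

text \<open>Q~(f) < \<infinity>: both nonnegative series are summable.\<close>
definition form_domain :: "('a \<Rightarrow> 'a \<Rightarrow> real) \<Rightarrow> ('a \<Rightarrow> real) \<Rightarrow> ('a \<Rightarrow> complex) set" where
  "form_domain b c = {f.
     (\<lambda>(x, y). b x y * (cmod (f x - f y))\<^sup>2) summable_on UNIV \<and>
     (\<lambda>x. c x * (cmod (f x))\<^sup>2) summable_on UNIV}"

definition linfty :: "('a \<Rightarrow> complex) set" where
  "linfty = {f. bounded (range f)}"

definition canonically_compactifiable :: "('a \<Rightarrow> 'a \<Rightarrow> real) \<Rightarrow> ('a \<Rightarrow> real) \<Rightarrow> bool" where
  "canonically_compactifiable b c \<longleftrightarrow> form_domain b c \<subseteq> linfty"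

definition sup_closure :: "('a \<Rightarrow> complex) set \<Rightarrow> ('a \<Rightarrow> complex) set" where
  "sup_closure S = {f \<in> linfty. \<forall>e>0. \<exists>g\<in>S. \<forall>x. cmod (f x - g x) < e}"

definition cstar_subalgebra :: "('a \<Rightarrow> complex) set \<Rightarrow> bool" where
  "cstar_subalgebra B \<longleftrightarrow> B \<subseteq> linfty \<and> (\<lambda>_. 0) \<in> B \<and>
     (\<forall>f\<in>B. \<forall>g\<in>B. (\<lambda>x. f x + g x) \<in> B) \<and>
     (\<forall>f\<in>B. \<forall>a. (\<lambda>x. a * f x) \<in> B) \<and>
     (\<forall>f\<in>B. \<forall>g\<in>B. (\<lambda>x. f x * g x) \<in> B) \<and>
     (\<forall>f\<in>B. (\<lambda>x. cnj (f x)) \<in> B) \<and>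
     sup_closure B \<subseteq> B"

definition algA :: "('a \<Rightarrow> 'a \<Rightarrow> real) \<Rightarrow> ('a \<Rightarrow> real) \<Rightarrow> ('a \<Rightarrow> complex) set" where
  "algA b c = sup_closure (form_domain b c)"

definition algA_plus :: "('a \<Rightarrow> 'a \<Rightarrow> real) \<Rightarrow> ('a \<Rightarrow> real) \<Rightarrow> ('a \<Rightarrow> complex) set" where
  "algA_plus b c = \<Inter>{B. cstar_subalgebra B \<and> algA b c \<subseteq> B \<and> (\<lambda>_. 1) \<in> B}"

text \<open>Characters of a subalgebra B, represented as extensional functions on B
  (value undefined outside B), so they live in the product space.\<close>
definition characters :: "('a \<Rightarrow> complex) set \<Rightarrow> (('a \<Rightarrow> complex) \<Rightarrow> complex) set" where
  "characters B = {\<phi> \<in> extensional B.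
     (\<forall>f\<in>B. \<forall>g\<in>B. \<phi> (\<lambda>x. f x + g x) = \<phi> f + \<phi> g) \<and>
     (\<forall>f\<in>B. \<forall>a. \<phi> (\<lambda>x. a * f x) = a * \<phi> f) \<and>
     (\<forall>f\<in>B. \<forall>g\<in>B. \<phi> (\<lambda>x. f x * g x) = \<phi> f * \<phi> g) \<and>
     (\<exists>f\<in>B. \<phi> f \<noteq> 0)}"

definition weak_star_top :: "('a \<Rightarrow> complex) set \<Rightarrow> (('a \<Rightarrow> complex) \<Rightarrow> complex) topology" where
  "weak_star_top B = subtopology (product_topology (\<lambda>_. euclidean) B) (characters B)"

definition char_space :: "('a \<Rightarrow> 'a \<Rightarrow> real) \<Rightarrow> ('a \<Rightarrow> real) \<Rightarrow> (('a \<Rightarrow> complex) \<Rightarrow> complex) topology" where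
  "char_space b c = weak_star_top (algA_plus b c)"

definition jmap :: "('a \<Rightarrow> 'a \<Rightarrow> real) \<Rightarrow> ('a \<Rightarrow> real) \<Rightarrow> 'a \<Rightarrow> (('a \<Rightarrow> complex) \<Rightarrow> complex)" where
  "jmap b c x = restrict (\<lambda>f. f x) (algA_plus b c)"

end

theory Submission
  imports Defs
begin

lemma linfty_I: "(\<And>x. cmod (f x) \<le> K) \<Longrightarrow> f \<in> linfty"
  unfolding linfty_def bounded_iff by auto

lemma linfty_E: assumes "f \<in> linfty" obtains K where "\<And>x. cmod (f x) \<le> K"
  using assms unfolding linfty_def bounded_iff by auto

lemma linfty_cstar: "cstar_subalgebra (linfty :: ('a \<Rightarrow> complex) set)"
  unfolding cstar_subalgebra_def
proof (intro conjI ballI allI)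
  show "(\<lambda>_. 0) \<in> linfty" by (rule linfty_I[of _ 0]) simp
next
  fix f g :: "'a \<Rightarrow> complex" assume "f \<in> linfty" "g \<in> linfty"
  obtain K where K: "\<And>x. cmod (f x) \<le> K" using linfty_E[OF \<open>f \<in> linfty\<close>] by blast
  obtain L where L: "\<And>x. cmod (g x) \<le> L" using linfty_E[OF \<open>g \<in> linfty\<close>] by blast
  show "(\<lambda>x. f x + g x) \<in> linfty"
    by (rule linfty_I[of _ "K + L"]) (meson K L add_mono norm_triangle_ineq order_trans)
  show "(\<lambda>x. f x * g x) \<in> linfty"
  proof (rule linfty_I[of _ "K * L"])
    fix x
    have "cmod (f x * g x) = cmod (f x) * cmod (g x)" by (simp add: norm_mult)
    also have "\<dots> \<le> K * L" using K L by (meson mult_mono norm_ge_zero order_trans)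
    finally show "cmod (f x * g x) \<le> K * L" .
  qed
next
  fix f :: "'a \<Rightarrow> complex" and a assume "f \<in> linfty"
  then obtain K where K: "\<And>x. cmod (f x) \<le> K" using linfty_E by blast
  show "(\<lambda>x. a * f x) \<in> linfty"
    by (rule linfty_I[of _ "cmod a * K"]) (simp add: norm_mult K mult_left_mono)
next
  fix f :: "'a \<Rightarrow> complex" assume "f \<in> linfty"
  then obtain K where K: "\<And>x. cmod (f x) \<le> K" using linfty_E by blast
  show "(\<lambda>x. cnj (f x)) \<in> linfty"
    by (rule linfty_I[of _ K]) (simp add: K)
next
  show "sup_closure linfty \<subseteq> linfty" unfolding sup_closure_def by blast
qed simp

lemma sup_closure_mono: "S \<subseteq> T \<Longrightarrow> sup_closure S \<subseteq> sup_closure T"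
  unfolding sup_closure_def by blast

lemma sup_closure_self: "f \<in> S \<Longrightarrow> f \<in> linfty \<Longrightarrow> f \<in> sup_closure S"
  unfolding sup_closure_def by force

lemma Inter_cstar:
  assumes "\<And>B. B \<in> \<B> \<Longrightarrow> cstar_subalgebra B" "\<B> \<noteq> {}"
  shows "cstar_subalgebra (\<Inter>\<B>)"
  unfolding cstar_subalgebra_def
proof (intro conjI ballI allI)
  from assms(2) obtain B0 where "B0 \<in> \<B>" by blast
  then show "\<Inter>\<B> \<subseteq> linfty" using assms(1)[of B0] unfolding cstar_subalgebra_def by blast
  show "(\<lambda>_. 0) \<in> \<Inter>\<B>" using assms(1) unfolding cstar_subalgebra_def by blast
  fix f g assume f: "f \<in> \<Inter>\<B>" and g: "g \<in> \<Inter>\<B>"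
  show "(\<lambda>x. f x + g x) \<in> \<Inter>\<B>"
  proof
    fix B assume B: "B \<in> \<B>" then show "(\<lambda>x. f x + g x) \<in> B"
      using assms(1)[OF B] f g unfolding cstar_subalgebra_def by blast
  qed
  show "(\<lambda>x. f x * g x) \<in> \<Inter>\<B>"
  proof
    fix B assume B: "B \<in> \<B>" then show "(\<lambda>x. f x * g x) \<in> B"
      using assms(1)[OF B] f g unfolding cstar_subalgebra_def by blast
  qed
next
  fix f a assume f: "f \<in> \<Inter>\<B>"
  show "(\<lambda>x. a * f x) \<in> \<Inter>\<B>"
  proof
    fix B assume B: "B \<in> \<B>" then show "(\<lambda>x. a * f x) \<in> B"
      using assms(1)[OF B] f unfolding cstar_subalgebra_def by blast
  qed
next
  fix f assume f: "f \<in> \<Inter>\<B>"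
  show "(\<lambda>x. cnj (f x)) \<in> \<Inter>\<B>"
  proof
    fix B assume B: "B \<in> \<B>" then show "(\<lambda>x. cnj (f x)) \<in> B"
      using assms(1)[OF B] f unfolding cstar_subalgebra_def by blast
  qed
next
  show "sup_closure (\<Inter>\<B>) \<subseteq> \<Inter>\<B>"
  proof
    fix f assume f: "f \<in> sup_closure (\<Inter>\<B>)"
    show "f \<in> \<Inter>\<B>"
    proof
      fix B assume B: "B \<in> \<B>"
      have "sup_closure (\<Inter>\<B>) \<subseteq> sup_closure B" by (rule sup_closure_mono) (use B in blast)
      then show "f \<in> B" using f assms(1)[OF B] unfolding cstar_subalgebra_def by blast
    qed
  qed
qed

lemma algA_plus_props:
  "cstar_subalgebra (algA_plus b c) \<and> (\<lambda>_. 1) \<in> algA_plus b c \<and> algA b c \<subseteq> algA_plus b c"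
proof -
  let ?B = "{B. cstar_subalgebra B \<and> algA b c \<subseteq> B \<and> (\<lambda>_. 1) \<in> B}"
  have "linfty \<in> ?B"
    using linfty_cstar by (auto simp: algA_def sup_closure_def intro: linfty_I[of _ 1])
  then have "?B \<noteq> {}" by blast
  then show ?thesis unfolding algA_plus_def using Inter_cstar[of ?B] by blast
qed

lemma char_add: "\<phi> \<in> characters A \<Longrightarrow> f \<in> A \<Longrightarrow> g \<in> A \<Longrightarrow> \<phi> (\<lambda>x. f x + g x) = \<phi> f + \<phi> g"
  unfolding characters_def by blast
lemma char_mult: "\<phi> \<in> characters A \<Longrightarrow> f \<in> A \<Longrightarrow> g \<in> A \<Longrightarrow> \<phi> (\<lambda>x. f x * g x) = \<phi> f * \<phi> g"
  unfolding characters_def by blast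
lemma char_smult: "\<phi> \<in> characters A \<Longrightarrow> f \<in> A \<Longrightarrow> \<phi> (\<lambda>x. a * f x) = a * \<phi> f"
  unfolding characters_def by blast
lemma cs_add: "cstar_subalgebra A \<Longrightarrow> f \<in> A \<Longrightarrow> g \<in> A \<Longrightarrow> (\<lambda>x. f x + g x) \<in> A"
  unfolding cstar_subalgebra_def by blast
lemma cs_mult: "cstar_subalgebra A \<Longrightarrow> f \<in> A \<Longrightarrow> g \<in> A \<Longrightarrow> (\<lambda>x. f x * g x) \<in> A"
  unfolding cstar_subalgebra_def by blast
lemma cs_smult: "cstar_subalgebra A \<Longrightarrow> f \<in> A \<Longrightarrow> (\<lambda>x. a * f x) \<in> A"
  unfolding cstar_subalgebra_def by blast
lemma cs_cnj: "cstar_subalgebra A \<Longrightarrow> f \<in> A \<Longrightarrow> (\<lambda>x. cnj (f x)) \<in> A"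
  unfolding cstar_subalgebra_def by blast
lemma cs_zero: "cstar_subalgebra A \<Longrightarrow> (\<lambda>_. 0) \<in> A"
  unfolding cstar_subalgebra_def by blast
lemma cs_closure: "cstar_subalgebra A \<Longrightarrow> f \<in> sup_closure A \<Longrightarrow> f \<in> A"
  unfolding cstar_subalgebra_def by blast
lemma cs_linfty: "cstar_subalgebra A \<Longrightarrow> f \<in> A \<Longrightarrow> f \<in> linfty"
  unfolding cstar_subalgebra_def by blast

lemma char_one:
  assumes A: "cstar_subalgebra A" and one: "(\<lambda>_. 1) \<in> A" and phi: "\<phi> \<in> characters A"
  shows "\<phi> (\<lambda>_. 1) = 1"
proof -
  from phi obtain f where f: "f \<in> A" "\<phi> f \<noteq> 0" unfolding characters_def by blast
  have "\<phi> (\<lambda>x. f x * 1) = \<phi> f * \<phi> (\<lambda>_. 1)"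
    using char_mult[OF phi f(1) one] by simp
  then have "\<phi> f = \<phi> f * \<phi> (\<lambda>_. 1)" by simp
  with f show ?thesis by simp
qed

lemma char_zero:
  assumes A: "cstar_subalgebra A" and phi: "\<phi> \<in> characters A"
  shows "\<phi> (\<lambda>_. 0) = 0"
proof -
  have z: "(\<lambda>_. 0) \<in> A" using A unfolding cstar_subalgebra_def by blast
  have "\<phi> (\<lambda>x. 0 * (0::complex)) = 0 * \<phi> (\<lambda>_. 0)"
    using char_smult[OF phi z, of 0] by simp
  then show ?thesis by simp
qed

lemma jmap_char_gen:
  assumes A: "cstar_subalgebra A" and one: "(\<lambda>_. 1) \<in> A"
  shows "restrict (\<lambda>f. f x) A \<in> characters A"
  using A one unfolding characters_def cstar_subalgebra_def
  by (auto intro!: bexI[of _ "\<lambda>_. 1"])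

lemma char_top: "characters A \<subseteq> topspace (product_topology (\<lambda>_. euclidean) A)"
  unfolding characters_def by (auto simp: PiE_def)

lemma indicator_form_domain:
  assumes wg: "weighted_graph b c"
  shows "(\<lambda>y. if y = x then 1 else 0) \<in> form_domain b c"
proof -
  let ?e = "\<lambda>y::'a. if y = x then (1::complex) else 0"
  have bsum: "\<And>u. b u summable_on UNIV" and bsym: "\<And>u v. b u v = b v u" and bxx: "\<And>u. b u u = 0"
    using wg unfolding weighted_graph_def by auto
  define g1 where "g1 = (\<lambda>(u,v). if u = x then b x v else 0)"
  define g2 where "g2 = (\<lambda>(u,v). if v = x then b u x else 0)"
  have eq: "(\<lambda>(u, v). b u v * (cmod (?e u - ?e v))\<^sup>2) = (\<lambda>p. g1 p + g2 p)"
    by (auto simp: fun_eq_iff g1_def g2_def bxx)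
  have "g1 summable_on range (Pair x)"
    by (subst summable_on_reindex) (auto simp: inj_on_def g1_def o_def bsum)
  then have s1: "g1 summable_on UNIV"
    by (rule summable_on_cong_neutral[THEN iffD1, rotated -1]) (auto simp: g1_def)
  have "g2 summable_on range (\<lambda>u. (u, x))"
    by (subst summable_on_reindex) (auto simp: inj_on_def g2_def o_def bsum bsym[of _ x])
  then have s2: "g2 summable_on UNIV"
    by (rule summable_on_cong_neutral[THEN iffD1, rotated -1]) (auto simp: g2_def)
  have s3: "(\<lambda>u. c u * (cmod (?e u))\<^sup>2) summable_on UNIV"
  proof -
    have "(\<lambda>u. c u * (cmod (?e u))\<^sup>2) summable_on {x}" by simp
    then show ?thesis
      by (rule summable_on_cong_neutral[THEN iffD1, rotated -1]) auto
  qed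
  show ?thesis unfolding form_domain_def using eq summable_on_add[OF s1 s2] s3 by simp
qed

lemma singleton_open:
  assumes A: "cstar_subalgebra A" and one: "(\<lambda>_. 1) \<in> A"
    and e: "(\<lambda>y. if y = x then 1 else 0) \<in> A"
  shows "openin (weak_star_top A) {restrict (\<lambda>f. f x) A}"
proof -
  let ?P = "product_topology (\<lambda>_. euclidean) A :: (('a \<Rightarrow> complex) \<Rightarrow> complex) topology"
  let ?e = "\<lambda>y. if y = x then 1 else (0::complex)"
  let ?U = "{\<phi> \<in> topspace ?P. \<phi> ?e \<in> ball 1 (1/2)}"
  let ?j = "restrict (\<lambda>f. f x) A"
  have U: "openin ?P ?U"
    by (rule openin_continuous_map_preimage[OF continuous_map_product_projection[OF e]]) simp
  have jc: "?j \<in> characters A" by (rule jmap_char_gen[OF A one])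
  have "{?j} = ?U \<inter> characters A"
  proof (intro equalityI subsetI)
    fix \<phi> assume "\<phi> \<in> {?j}"
    then show "\<phi> \<in> ?U \<inter> characters A" using jc char_top e by auto
  next
    fix \<phi> assume \<phi>: "\<phi> \<in> ?U \<inter> characters A"
    then have phi: "\<phi> \<in> characters A" by blast
    have "\<phi> (\<lambda>y. ?e y * ?e y) = \<phi> ?e * \<phi> ?e" by (rule char_mult[OF phi e e])
    moreover have "(\<lambda>y. ?e y * ?e y) = ?e" by (simp add: fun_eq_iff)
    ultimately have sq: "\<phi> ?e = \<phi> ?e * \<phi> ?e" by simp
    have d: "dist 1 (\<phi> ?e) < 1/2" using \<phi> by auto
    have e1: "\<phi> ?e = 1"
    proof (cases "\<phi> ?e = 0")
      case True then show ?thesis using d by simp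
    next
      case False then show ?thesis using sq
        by (metis mult_cancel_left2)
    qed
    have val: "\<phi> f = f x" if f: "f \<in> A" for f
    proof -
      have "\<phi> (\<lambda>y. f y * ?e y) = \<phi> f * \<phi> ?e" by (rule char_mult[OF phi f e])
      moreover have "\<phi> (\<lambda>y. f x * ?e y) = f x * \<phi> ?e" by (rule char_smult[OF phi e])
      moreover have "(\<lambda>y. f y * ?e y) = (\<lambda>y. f x * ?e y)" by (simp add: fun_eq_iff)
      ultimately show ?thesis using e1 by simp
    qed
    have "\<phi> \<in> extensional A" using phi unfolding characters_def by blast
    then have "\<phi> = ?j"
      by (intro ext) (auto simp: val extensional_def)
    then show "\<phi> \<in> {?j}" by simp
  qed
  then show ?thesis unfolding weak_star_top_def openin_subtopology using U by blast
qed

lemma core: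
  assumes A: "cstar_subalgebra A" and one: "(\<lambda>_. 1) \<in> A" and phi: "\<phi> \<in> characters A"
    and fin: "finite F" and FA: "F \<subseteq> A" and eps: "\<epsilon> > 0"
  shows "\<exists>x. \<forall>i\<in>F. cmod (i x - \<phi> i) < \<epsilon>"
proof (rule ccontr)
  assume "\<not> ?thesis"
  then have H: "\<forall>x. \<exists>i\<in>F. \<epsilon> \<le> cmod (i x - \<phi> i)" by (auto simp: not_less)
  have phi1: "\<phi> (\<lambda>_. 1) = 1" by (rule char_one[OF A one phi])
  define g where "g = (\<lambda>x. \<Sum>i\<in>F. (i x - \<phi> i) * cnj (i x - \<phi> i))"
  have gen: "(\<lambda>x. \<Sum>i\<in>G. (i x - \<phi> i) * cnj (i x - \<phi> i)) \<in> A \<and>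
      \<phi> (\<lambda>x. \<Sum>i\<in>G. (i x - \<phi> i) * cnj (i x - \<phi> i)) = 0"
    if "finite G" "G \<subseteq> A" for G
    using that
  proof (induction G rule: finite_induct)
    case empty
    show ?case using cs_zero[OF A] char_zero[OF A phi] by simp
  next
    case (insert i G)
    then have iA: "i \<in> A" and GA: "G \<subseteq> A" by auto
    have c1: "(\<lambda>x. (- \<phi> i) * 1) \<in> A" by (rule cs_smult[OF A one])
    have d1: "(\<lambda>x. i x + (- \<phi> i) * 1) \<in> A" by (rule cs_add[OF A iA c1])
    have "\<phi> (\<lambda>x. i x + (- \<phi> i) * 1) = \<phi> i + \<phi> (\<lambda>x. (- \<phi> i) * 1)"
      by (rule char_add[OF phi iA c1])
    also have "\<phi> (\<lambda>x. (- \<phi> i) * 1) = (- \<phi> i) * \<phi> (\<lambda>_. 1)" by (rule char_smult[OF phi one])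
    finally have d2: "\<phi> (\<lambda>x. i x + (- \<phi> i) * 1) = 0" using phi1 by simp
    have eqd: "(\<lambda>x. i x + (- \<phi> i) * 1) = (\<lambda>x. i x - \<phi> i)" by (simp add: fun_eq_iff)
    have dA: "(\<lambda>x. i x - \<phi> i) \<in> A" and dphi: "\<phi> (\<lambda>x. i x - \<phi> i) = 0"
      using d1 d2 eqd by auto
    have cA: "(\<lambda>x. cnj (i x - \<phi> i)) \<in> A" by (rule cs_cnj[OF A dA])
    have tA: "(\<lambda>x. (i x - \<phi> i) * cnj (i x - \<phi> i)) \<in> A" by (rule cs_mult[OF A dA cA])
    have tphi: "\<phi> (\<lambda>x. (i x - \<phi> i) * cnj (i x - \<phi> i)) = 0"
      using char_mult[OF phi dA cA] dphi by simp
    have IH: "(\<lambda>x. \<Sum>i\<in>G. (i x - \<phi> i) * cnj (i x - \<phi> i)) \<in> A"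
        "\<phi> (\<lambda>x. \<Sum>i\<in>G. (i x - \<phi> i) * cnj (i x - \<phi> i)) = 0"
      using insert.IH[OF GA] by auto
    have eqs: "(\<lambda>x. \<Sum>i\<in>insert i G. (i x - \<phi> i) * cnj (i x - \<phi> i)) =
       (\<lambda>x. (i x - \<phi> i) * cnj (i x - \<phi> i) + (\<Sum>i\<in>G. (i x - \<phi> i) * cnj (i x - \<phi> i)))"
      using insert.hyps by (simp add: fun_eq_iff)
    show ?case unfolding eqs
      using cs_add[OF A tA IH(1)] char_add[OF phi tA IH(1)] tphi IH(2) by simp
  qed
  have gA: "g \<in> A" and gphi: "\<phi> g = 0" using gen[OF fin FA] unfolding g_def by auto
  define r where "r = (\<lambda>x. \<Sum>i\<in>F. (cmod (i x - \<phi> i))\<^sup>2)"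
  have greal: "g x = complex_of_real (r x)" for x
    unfolding g_def r_def of_real_sum by (intro sum.cong refl) (rule complex_norm_square[symmetric])
  have rge: "\<epsilon>\<^sup>2 \<le> r x" for x
  proof -
    obtain i where i: "i \<in> F" "\<epsilon> \<le> cmod (i x - \<phi> i)" using H by blast
    have "\<epsilon>\<^sup>2 \<le> (cmod (i x - \<phi> i))\<^sup>2" using i eps by (simp add: power_mono)
    also have "\<dots> \<le> r x" unfolding r_def
      by (rule member_le_sum[OF i(1) _ fin]) simp
    finally show ?thesis .
  qed
  have rpos: "r x > 0" for x using rge[of x] eps by (smt (verit) zero_less_power)
  obtain M where M: "\<And>x. cmod (g x) \<le> M" using linfty_E[OF cs_linfty[OF A gA]] by blast
  have rM: "r x \<le> M" for x using M[of x] rpos[of x] by (simp add: greal)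
  have eM: "\<epsilon>\<^sup>2 \<le> M" using rge rM order_trans by blast
  have Mpos: "M > 0" using eM eps by (smt (verit) zero_less_power)
  define q where "q = 1 - \<epsilon>\<^sup>2 / M"
  have q1: "q < 1" unfolding q_def using Mpos eps by simp
  define h where "h = (\<lambda>x. 1 - r x / M)"
  have h0: "0 \<le> h x" for x unfolding h_def using rM[of x] Mpos by simp
  have hq: "h x \<le> q" for x unfolding h_def q_def using rge[of x] Mpos
    by (simp add: divide_right_mono)
  define hc where "hc = (\<lambda>x. complex_of_real (h x))"
  have hceq: "hc = (\<lambda>x. 1 + (- complex_of_real (1 / M)) * g x)"
    by (simp add: fun_eq_iff hc_def h_def greal)
  have hcA: "hc \<in> A" unfolding hceq by (rule cs_add[OF A one cs_smult[OF A gA]])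
  have powA: "(\<lambda>x. hc x ^ k) \<in> A" for k
  proof (induction k)
    case 0 then show ?case using one by simp
  next
    case (Suc k)
    have "(\<lambda>x. hc x ^ Suc k) = (\<lambda>x. hc x * hc x ^ k)" by simp
    then show ?case using cs_mult[OF A hcA Suc] by simp
  qed
  have sumA: "(\<lambda>x. \<Sum>k<N. hc x ^ k) \<in> A" for N
  proof (induction N)
    case 0 then show ?case using cs_zero[OF A] by simp
  next
    case (Suc N)
    then show ?case using cs_add[OF A Suc powA[of N]] by simp
  qed
  define u where "u = (\<lambda>x. complex_of_real (M / r x))"
  have uclos: "u \<in> sup_closure A"
    unfolding sup_closure_def
  proof (intro CollectI conjI allI impI)
    show "u \<in> linfty"
    proof (rule linfty_I)
      fix x
      have "cmod (u x) = M / r x" unfolding u_def using Mpos rpos[of x] by (simp add: norm_divide)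
      also have "\<dots> \<le> M / \<epsilon>\<^sup>2" using divide_left_mono[of "\<epsilon>\<^sup>2" "r x" M] rge[of x] Mpos eps rpos[of x] by simp
      finally show "cmod (u x) \<le> M / \<epsilon>\<^sup>2" .
    qed
    fix e :: real assume e: "e > 0"
    obtain N where N: "q ^ N < e * \<epsilon>\<^sup>2 / M"
      using real_arch_pow_inv[OF _ q1, of "e * \<epsilon>\<^sup>2 / M"] e eps Mpos by auto
    show "\<exists>v\<in>A. \<forall>x. cmod (u x - v x) < e"
    proof (intro bexI allI)
      fix x
      have hne: "h x \<noteq> 1" using hq[of x] q1 by simp
      have omh: "1 - h x = r x / M" unfolding h_def by simp
      have sv: "(\<Sum>k<N. hc x ^ k) = complex_of_real (\<Sum>k<N. h x ^ k)" unfolding hc_def by simp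
      have "(\<Sum>k<N. h x ^ k) = (1 - h x ^ N) / (1 - h x)" using sum_gp_strict[of "h x" N] hne by simp
      also have "\<dots> = (1 - h x ^ N) * M / r x" unfolding omh using Mpos rpos[of x] by simp
      finally have re: "M / r x - (\<Sum>k<N. h x ^ k) = h x ^ N * M / r x"
        using rpos[of x] by (simp add: field_simps)
      have "u x - (\<Sum>k<N. hc x ^ k) = complex_of_real (M / r x - (\<Sum>k<N. h x ^ k))"
        unfolding sv u_def of_real_diff ..
      then have "u x - (\<Sum>k<N. hc x ^ k) = complex_of_real (h x ^ N * M / r x)"
        unfolding re .
      moreover have "0 \<le> h x ^ N * M / r x" using h0[of x] Mpos rpos[of x] by simp
      ultimately have "cmod (u x - (\<Sum>k<N. hc x ^ k)) = h x ^ N * M / r x"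
        by (simp only: norm_of_real abs_of_nonneg)
      also have "\<dots> = h x ^ N * (M / r x)" by simp
      also have "\<dots> \<le> q ^ N * (M / \<epsilon>\<^sup>2)"
      proof (rule mult_mono)
        show "h x ^ N \<le> q ^ N" using h0 hq by (simp add: power_mono)
        show "M / r x \<le> M / \<epsilon>\<^sup>2" using divide_left_mono[of "\<epsilon>\<^sup>2" "r x" M] rge[of x] Mpos eps rpos[of x] by simp
        show "0 \<le> q ^ N" using h0[of x] hq[of x] by simp
        show "0 \<le> M / r x" using Mpos rpos[of x] by simp
      qed
      also have "\<dots> < e" using N Mpos eps by (simp add: field_simps)
      finally show "cmod (u x - (\<Sum>k<N. hc x ^ k)) < e" .
    qed (rule sumA)
  qed
  have uA: "u \<in> A" by (rule cs_closure[OF A uclos])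
  have ug: "(\<lambda>x. u x * g x) = (\<lambda>x. complex_of_real M * 1)"
  proof (rule ext)
    fix x
    have "M / r x * r x = M" using rpos[of x] by simp
    then show "u x * g x = complex_of_real M * 1" unfolding u_def greal
      by (metis of_real_mult mult_1_right)
  qed
  have "\<phi> (\<lambda>x. u x * g x) = 0" using char_mult[OF phi uA gA] gphi by simp
  moreover have "\<phi> (\<lambda>x. complex_of_real M * 1) = complex_of_real M"
    using char_smult[OF phi one, of "complex_of_real M"] phi1 by simp
  ultimately show False using ug Mpos by simp
qed

lemma density:
  assumes A: "cstar_subalgebra A" and one: "(\<lambda>_. 1) \<in> A" and phi: "\<phi> \<in> characters A"
  shows "\<phi> \<in> (weak_star_top A) closure_of (range (\<lambda>x. restrict (\<lambda>f. f x) A))"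
  unfolding in_closure_of
proof (intro conjI allI impI)
  let ?P = "product_topology (\<lambda>_. euclidean) A :: (('a \<Rightarrow> complex) \<Rightarrow> complex) topology"
  have topK: "topspace (weak_star_top A) = characters A"
    unfolding weak_star_top_def using char_top[of A] by auto
  show "\<phi> \<in> topspace (weak_star_top A)" using phi topK by simp
  fix T assume "\<phi> \<in> T \<and> openin (weak_star_top A) T"
  then have phiT: "\<phi> \<in> T" and Top: "openin (weak_star_top A) T" by auto
  obtain T' where T': "openin ?P T'" and Teq: "T = T' \<inter> characters A"
    using Top unfolding weak_star_top_def openin_subtopology by blast
  have "\<phi> \<in> T'" using phiT Teq by blast
  then obtain U where finU: "finite {i \<in> A. U i \<noteq> UNIV}"
      and Uo: "\<forall>i\<in>A. open (U i)" and phiU: "\<phi> \<in> Pi\<^sub>E A U" and UT: "Pi\<^sub>E A U \<subseteq> T'"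
    using T' unfolding openin_product_topology_alt by auto
  define F where "F = {i \<in> A. U i \<noteq> UNIV}"
  have "\<forall>i\<in>F. \<exists>d>0. ball (\<phi> i) d \<subseteq> U i"
  proof
    fix i assume "i \<in> F"
    then have "i \<in> A" unfolding F_def by blast
    then have "open (U i)" "\<phi> i \<in> U i" using Uo phiU by (auto simp: PiE_iff)
    then show "\<exists>d>0. ball (\<phi> i) d \<subseteq> U i" using open_contains_ball by blast
  qed
  then obtain epsf where epsf: "\<And>i. i \<in> F \<Longrightarrow> epsf i > 0 \<and> ball (\<phi> i) (epsf i) \<subseteq> U i"
    by metis
  define \<epsilon> where "\<epsilon> = Min (insert 1 (epsf ` F))"
  have finF: "finite F" using finU unfolding F_def .
  have epos: "\<epsilon> > 0" unfolding \<epsilon>_def using finF epsf by (auto simp: Min_gr_iff)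
  have ele: "\<epsilon> \<le> epsf i" if "i \<in> F" for i
    unfolding \<epsilon>_def using finF that by (auto intro: Min_le)
  obtain x where x: "\<forall>i\<in>F. cmod (i x - \<phi> i) < \<epsilon>"
    using core[OF A one phi finF _ epos] unfolding F_def by blast
  let ?j = "restrict (\<lambda>f. f x) A"
  have "?j \<in> Pi\<^sub>E A U"
  proof -
    have "?j i \<in> U i" if i: "i \<in> A" for i
    proof (cases "U i = UNIV")
      case True then show ?thesis by simp
    next
      case False
      then have iF: "i \<in> F" unfolding F_def using i by blast
      have "dist (\<phi> i) (i x) < epsf i"
      proof -
        have "cmod (i x - \<phi> i) < \<epsilon>" using x iF by blast
        then show ?thesis using ele[OF iF] by (simp add: dist_norm norm_minus_commute)
      qed
      then have "i x \<in> U i" using epsf[OF iF] by auto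
      then show ?thesis using i by simp
    qed
    then show ?thesis by (auto simp: PiE_iff)
  qed
  then have "?j \<in> T" using UT Teq jmap_char_gen[OF A one] by blast
  then show "\<exists>y. y \<in> range (\<lambda>x. restrict (\<lambda>f. f x) A) \<and> y \<in> T" by blast
qed

theorem mainTheorem10:
  fixes b :: "'a::countable \<Rightarrow> 'a \<Rightarrow> real" and c :: "'a \<Rightarrow> real"
  assumes "infinite (UNIV :: 'a set)"
    and "weighted_graph b c"
    and "graph_connected b"
    and "canonically_compactifiable b c"
  shows "(\<forall>x. jmap b c x \<in> characters (algA_plus b c)) \<and>
         openin (char_space b c) (range (jmap b c)) \<and>
         (char_space b c) closure_of (range (jmap b c)) = topspace (char_space b c) \<and>
         (\<forall>x. openin (char_space b c) {jmap b c x})"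
proof -
  define A where "A = algA_plus b c"
  have A: "cstar_subalgebra A" and one: "(\<lambda>_. 1) \<in> A" and sub: "algA b c \<subseteq> A"
    using algA_plus_props[of b c] unfolding A_def by auto
  have jeq: "jmap b c = (\<lambda>x. restrict (\<lambda>f. f x) A)" unfolding A_def by (simp add: fun_eq_iff jmap_def)
  have K: "char_space b c = weak_star_top A" unfolding A_def char_space_def ..
  have eA: "(\<lambda>y. if y = x then 1 else 0) \<in> A" for x
  proof -
    have "(\<lambda>y. if y = x then 1 else (0::complex)) \<in> linfty" by (rule linfty_I[of _ 1]) simp
    then have "(\<lambda>y. if y = x then 1 else (0::complex)) \<in> algA b c"
      unfolding algA_def by (rule sup_closure_self[OF indicator_form_domain[OF assms(2)]])
    then show ?thesis using sub by blast
  qed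
  have p1: "\<forall>x. jmap b c x \<in> characters (algA_plus b c)"
    using jmap_char_gen[OF A one] unfolding jeq A_def by blast
  have p4: "\<forall>x. openin (char_space b c) {jmap b c x}"
    unfolding K jeq using singleton_open[OF A one eA] by blast
  have p2: "openin (char_space b c) (range (jmap b c))"
  proof -
    have "range (jmap b c) = \<Union>((\<lambda>x. {jmap b c x}) ` UNIV)" by blast
    then show ?thesis using p4 by (auto intro!: openin_Union)
  qed
  have topK: "topspace (weak_star_top A) = characters A"
    unfolding weak_star_top_def using char_top[of A] by auto
  have p3: "(char_space b c) closure_of (range (jmap b c)) = topspace (char_space b c)"
  proof
    show "char_space b c closure_of range (jmap b c) \<subseteq> topspace (char_space b c)"
      by (rule closure_of_subset_topspace)
    show "topspace (char_space b c) \<subseteq> char_space b c closure_of range (jmap b c)"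
      unfolding K jeq topK using density[OF A one] by blast
  qed
  show ?thesis using p1 p2 p3 p4 by blast
qed

end
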